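(* Let $a>0$, $b,c\ge 0$, and consider the system $$\dot x=x(1-y+cx-axz),\qquad \dot y=y(-1+x),\qquad \dot z=z(-b+ax^2).$$ Let $f$ be an irreducible Darboux polynomial of degree greater than one with cofactor $K=\alpha_2y$, $\alpha_2\in\mathbb{C}$. Then $\alpha_2=0$.
   Context: A Darboux polynomial is $f\in\mathbb{C}[x,y,z]$ with $x(1-y+cx-axz)f_x+y(-1+x)f_y+z(-b+ax^2)f_z=Kf$ for a polynomial cofactor $K$ of degree at most two. *)

theory Defs
  imports "HOL-Computational_Algebra.Polynomial_Factorial"
begin

text \<open>Polynomials in C[x,y,z] are represented as nested univariate polynomials:
  type complex poly poly poly, outermost variable z, middle y, innermost x.
  This ring is isomorphic to C[x,y,z], and it is a factorial ring.\<close>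

type_synonym cpoly3 = "complex poly poly poly"

definition cst :: "complex \<Rightarrow> cpoly3" where
  "cst c = [:[:[:c:]:]:]"

definition varX :: cpoly3 where
  "varX = [:[:[:0, 1:]:]:]"

definition varY :: cpoly3 where
  "varY = [:[:0, 1:]:]"

definition varZ :: cpoly3 where
  "varZ = [:0, 1:]"

definition coeff3 :: "cpoly3 \<Rightarrow> nat \<Rightarrow> nat \<Rightarrow> nat \<Rightarrow> complex" where
  "coeff3 f i j k = coeff (coeff (coeff f k) j) i"

definition tdeg :: "cpoly3 \<Rightarrow> nat" where
  "tdeg f = Max ({i + j + k | i j k. coeff3 f i j k \<noteq> 0} \<union> {0})"

definition dX :: "cpoly3 \<Rightarrow> cpoly3" where
  "dX f = map_poly (map_poly pderiv) f"

definition dY :: "cpoly3 \<Rightarrow> cpoly3" where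
  "dY f = map_poly pderiv f"

definition dZ :: "cpoly3 \<Rightarrow> cpoly3" where
  "dZ f = pderiv f"

definition darboux :: "real \<Rightarrow> real \<Rightarrow> real \<Rightarrow> cpoly3 \<Rightarrow> cpoly3 \<Rightarrow> bool" where
  "darboux a b c f K \<longleftrightarrow> f \<noteq> 0 \<and> tdeg K \<le> 2 \<and>
     varX * (1 - varY + cst (complex_of_real c) * varX - cst (complex_of_real a) * varX * varZ) * dX f
     + varY * (-1 + varX) * dY f
     + varZ * (- cst (complex_of_real b) + cst (complex_of_real a) * varX ^ 2) * dZ f
     = K * f"

end

theory Submission
  imports Defs
begin

lemma hom_neg:
  fixes h :: "'a::ab_group_add \<Rightarrow> 'b::ab_group_add"
  assumes "\<And>x y. h (x+y) = h x + h y"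
  shows "h (-x) = - h x"
proof -
  have "h 0 = 0" using assms[of 0 0] by simp
  moreover have "h (-x + x) = h (-x) + h x" by (rule assms)
  ultimately show ?thesis by (simp add: eq_neg_iff_add_eq_0)
qed

lemma mp_add:
  fixes h :: "'a::comm_ring_1 \<Rightarrow> 'b::comm_ring_1"
  assumes "\<And>x y. h (x+y) = h x + h y" "h 0 = 0"
  shows "map_poly h (p+q) = map_poly h p + map_poly h q"
  by (rule poly_eqI) (simp add: coeff_map_poly assms)

lemma mp_mult:
  fixes h :: "'a::comm_ring_1 \<Rightarrow> 'b::comm_ring_1"
  assumes A: "\<And>x y. h (x+y) = h x + h y" and M: "\<And>x y. h (x*y) = h x * h y" and Z: "h 0 = 0"
  shows "map_poly h (p*q) = map_poly h p * map_poly h q"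
proof -
  have S: "h (sum g B) = sum (h \<circ> g) B" for g :: "nat \<Rightarrow> 'a" and B
    by (induction B rule: infinite_finite_induct) (simp_all add: A Z)
  show ?thesis
    by (rule poly_eqI) (simp add: coeff_map_poly Z coeff_mult S M)
qed

definition h0 :: "complex poly \<Rightarrow> complex" where "h0 p = coeff p 0"
definition E1 :: "complex poly poly \<Rightarrow> complex poly" where "E1 = map_poly h0"
definition E :: "cpoly3 \<Rightarrow> complex poly poly" where "E = map_poly E1"

lemma h0_add: "h0 (x+y) = h0 x + h0 y" and h0_mult: "h0 (x*y) = h0 x * h0 y" and h0_0: "h0 0 = 0"
  and h0_1: "h0 1 = 1"
  by (simp_all add: h0_def coeff_mult_0)

lemma E1_add: "E1 (x+y) = E1 x + E1 y" and E1_mult: "E1 (x*y) = E1 x * E1 y" and E1_0: "E1 0 = 0"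
  and E1_1: "E1 1 = 1"
  unfolding E1_def by (simp_all add: mp_add mp_mult h0_add h0_mult h0_0 h0_1)

lemma E_add: "E (x+y) = E x + E y" and E_mult: "E (x*y) = E x * E y" and E_0: "E 0 = 0"
  and E_1: "E 1 = 1"
  unfolding E_def by (simp_all add: mp_add mp_mult E1_add E1_mult E1_0 E1_1)

lemma E_neg: "E (-x) = - E x"
  by (rule hom_neg) (rule E_add)

lemma E1_neg: "E1 (-x) = - E1 x"
  by (rule hom_neg) (rule E1_add)

lemma E_varX: "E varX = 0"
  by (simp add: E_def E1_def h0_def varX_def map_poly_pCons)

lemma E_varY: "E varY = [:[:0,1:]:]"
  by (simp add: E_def E1_def h0_def varY_def map_poly_pCons)

lemma E_cst: "E (cst c) = [:[:c:]:]"
  by (simp add: E_def E1_def h0_def cst_def map_poly_pCons)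

lemma h0_of_nat: "h0 (of_nat n) = of_nat n"
  by (induction n) (simp_all add: h0_add h0_1 h0_0)

lemma E1_of_nat0: "E1 (of_nat n) = of_nat n"
  by (induction n) (simp_all add: E1_add E1_1 E1_0)

lemma E1_of_nat: "E1 (of_nat n * x) = of_nat n * E1 x"
  by (simp add: E1_mult E1_of_nat0)

lemma h0_of_nat': "h0 (of_nat n * x) = of_nat n * h0 x"
  by (simp add: h0_mult h0_of_nat)

lemma E_dY: "E (dY f) = map_poly pderiv (E f)"
  unfolding E_def dY_def
  apply (rule poly_eqI)
  apply (simp add: coeff_map_poly E1_0)
  apply (rule poly_eqI)
  apply (simp add: coeff_map_poly E1_def h0_0 coeff_pderiv h0_of_nat' del: of_nat_Suc)
  done

lemma E_dZ: "E (dZ f) = pderiv (E f)"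
  unfolding dZ_def
  apply (rule poly_eqI)
  apply (simp add: E_def coeff_map_poly E1_0 coeff_pderiv E1_of_nat del: of_nat_Suc)
  done

lemma key:
  fixes g :: "complex poly poly" and \<alpha> b :: complex
  assumes a: "\<alpha> \<noteq> 0"
    and eq: "- ([:[:0,1:]:] * map_poly pderiv g) - [:0,1:] * ([:[:b:]:] * pderiv g)
             = [:[:\<alpha>:]:] * [:[:0,1:]:] * g"
  shows "g = 0"
proof (rule poly_eqI)
  fix k
  define q where "q = coeff g k"
  have ck: "- ([:0,1:] * pderiv q) - smult (b * of_nat k) q = [:0,1:] * smult \<alpha> q"
  proof -
    have "coeff (- ([:[:0,1:]:] * map_poly pderiv g) - [:0,1:] * ([:[:b:]:] * pderiv g)) k
          = coeff ([:[:\<alpha>:]:] * [:[:0,1:]:] * g) k" using eq by simp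
    then show ?thesis
      by (cases k) (simp_all add: q_def coeff_map_poly coeff_pderiv mult_pCons_left smult_add_left smult_add_right of_nat_poly algebra_simps)
  qed
  show "coeff g k = coeff 0 k"
  proof (rule ccontr)
    assume "coeff g k \<noteq> coeff 0 k"
    hence qn: "q \<noteq> 0" by (simp add: q_def)
    define d where "d = degree q"
    have "coeff (- ([:0,1:] * pderiv q) - smult (b * of_nat k) q) (Suc d) = coeff ([:0,1:] * smult \<alpha> q) (Suc d)"
      using ck by simp
    hence "\<alpha> * coeff q d = 0"
      by (simp add: mult_pCons_left coeff_pderiv d_def coeff_eq_0)
    with a qn show False by (simp add: d_def)
  qed
qed

lemma smult_m1: "smult [:0, -1:] (p::complex poly poly) = - smult [:0,1:] p"
proof -
  have "[:0,-1:] = - [:0,1::complex:]" by simp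
  thus ?thesis by (simp only: smult_minus_left)
qed

lemma smult_m2: "smult [:- x:] (p::complex poly poly) = - smult [:x:] p"
proof -
  have "[:-x:] = - [:x::complex:]" by simp
  thus ?thesis by (simp only: smult_minus_left)
qed

lemma E_diff: "E (x - y) = E x - E y"
  by (simp only: diff_conv_add_uminus E_add E_neg)

lemma E_varZ: "E varZ = [:0,1:]"
  by (simp add: E_def varZ_def map_poly_pCons E1_1 E1_0)

lemma E_zero_coeff:
  assumes "E f = 0"
  shows "coeff (coeff (coeff f k) j) 0 = 0"
proof -
  have "coeff (coeff (E f) k) j = 0" using assms by simp
  thus ?thesis by (simp add: E_def E1_def h0_def coeff_map_poly E1_0[unfolded E1_def] h0_0[unfolded h0_def])
qed

lemma factor_x:
  assumes "E f = 0"
  shows "f = varX * map_poly (map_poly (\<lambda>p. p div [:0,1:])) f"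
proof (rule poly_eqI)
  fix k
  show "coeff f k = coeff (varX * map_poly (map_poly (\<lambda>p. p div [:0,1:])) f) k"
  proof (rule poly_eqI)
    fix j
    have z: "poly (coeff (coeff f k) j) 0 = 0" using E_zero_coeff[OF assms] by (simp add: poly_0_coeff_0)
    have "[:0,1:] dvd coeff (coeff f k) j"
      using z poly_eq_0_iff_dvd[of "coeff (coeff f k) j" 0] by simp
    hence "coeff (coeff f k) j = [:0,1:] * (coeff (coeff f k) j div [:0,1:])" by (rule dvd_mult_div_cancel[symmetric])
    thus "coeff (coeff f k) j = coeff (coeff (varX * map_poly (map_poly (\<lambda>p. p div [:0,1:])) f) k) j"
      by (simp add: varX_def coeff_map_poly)
  qed
qed

theorem lemma4p4:
  fixes a b c :: real and f :: cpoly3 and \<alpha>2 :: complex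
  assumes "a > 0" and "b \<ge> 0" and "c \<ge> 0"
    and "irreducible f"
    and "tdeg f > 1"
    and "darboux a b c f (cst \<alpha>2 * varY)"
  shows "\<alpha>2 = 0"
proof (rule ccontr)
  assume an: "\<alpha>2 \<noteq> 0"
  have eq: "varX * (1 - varY + cst (complex_of_real c) * varX - cst (complex_of_real a) * varX * varZ) * dX f
     + varY * (-1 + varX) * dY f
     + varZ * (- cst (complex_of_real b) + cst (complex_of_real a) * varX ^ 2) * dZ f
     = cst \<alpha>2 * varY * f" using assms(6) unfolding darboux_def by blast
  have "E (varX * (1 - varY + cst (complex_of_real c) * varX - cst (complex_of_real a) * varX * varZ) * dX f
     + varY * (-1 + varX) * dY f
     + varZ * (- cst (complex_of_real b) + cst (complex_of_real a) * varX ^ 2) * dZ f)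
     = E (cst \<alpha>2 * varY * f)" using eq by simp
  moreover have t1: "E (varX * (1 - varY + cst (complex_of_real c) * varX - cst (complex_of_real a) * varX * varZ) * dX f) = 0"
    by (simp add: E_mult E_varX)
  moreover have t2: "E (varY * (-1 + varX) * dY f) = -([:[:0,1:]:] * map_poly pderiv (E f))"
    by (simp add: E_mult E_add E_neg E_diff E_1 E_varX E_varY E_dY smult_m1)
  moreover have t3: "E (varZ * (- cst (complex_of_real b) + cst (complex_of_real a) * varX ^ 2) * dZ f)
      = - ([:0,1:] * ([:[:complex_of_real b:]:] * pderiv (E f)))"
    by (simp add: E_mult E_add E_neg E_diff E_varX E_varZ E_cst E_dZ power2_eq_square smult_m2)
  moreover have t4: "E (cst \<alpha>2 * varY * f) = [:[:\<alpha>2:]:] * [:[:0,1:]:] * E f"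
    by (simp add: E_mult E_cst E_varY)
  ultimately have "- ([:[:0,1:]:] * map_poly pderiv (E f)) - [:0,1:] * ([:[:complex_of_real b:]:] * pderiv (E f))
             = [:[:\<alpha>2:]:] * [:[:0,1:]:] * E f"
    by (simp only: E_add diff_conv_add_uminus add_0)
  hence E0: "E f = 0" by (rule key[OF an])
  define G where "G = map_poly (map_poly (\<lambda>p. p div [:0,1:])) f"
  have fG: "f = varX * G" using factor_x[OF E0] by (simp add: G_def)
  have nx: "\<not> is_unit varX" by (simp add: varX_def is_unit_poly_iff)
  have "is_unit varX \<or> is_unit G" using assms(4) fG irreducibleD by blast
  with nx have "is_unit G" by simp
  then obtain u where u: "G = [:[:[:u:]:]:]" by (auto simp: is_unit_poly_iff)
  have cf: "coeff3 f i j k \<noteq> 0 \<Longrightarrow> i + j + k = 1" for i j k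
    by (auto simp: fG u varX_def coeff3_def coeff_pCons split: nat.splits)
  define S where "S = {i + j + k | i j k. coeff3 f i j k \<noteq> 0} \<union> {0}"
  have sub: "S \<subseteq> {0, 1}" using cf unfolding S_def by auto
  have fin: "finite S" by (rule finite_subset[OF sub]) simp
  have ne: "S \<noteq> {}" unfolding S_def by simp
  have "Max S \<le> 1" using Max_le_iff[OF fin ne] sub by auto
  hence "tdeg f \<le> 1" unfolding tdeg_def S_def .
  with assms(5) show False by simp
qed

end
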